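(* In $\widehat{\mathcal{C}}$ there is a morphism $\forall:\mathbb{F}^{\mathbb{I}}\to\mathbb{F}$ which is internally right adjoint to the constant map $\mathbb{F}\to\mathbb{F}^{\mathbb{I}}$, $\phi\mapsto\lambda\_.\phi$, of internal posets; i.e. in the internal logic, for all $\phi:\mathbb{F}$ and $f:\mathbb{I}\to\mathbb{F}$, $\big(\forall (i:\mathbb{I}).\ \phi\Rightarrow f(i)\big)\iff\big(\phi\Rightarrow\forall(f)\big)$.
   Context: $\mathcal{C}$ is the category of cubes: objects finite sets of names, morphisms $I\to J$ functions $J\to\mathrm{dM}(I)$ with $\mathrm{dM}(I)$ the free De Morgan algebra on $I$, composition by substitution. $\mathbb{I}$ is the cubical set $I\mapsto\mathrm{dM}(I)$, an internal De Morgan algebra. $\mathbb{F}$ is the image (as a subobject of the subobject classifier $\Omega$) of the map $\mathbb{I}\to\Omega$, $r\mapsto(r=1)$, with lattice structure inherited from $\Omega$; concretely $\mathbb{F}(I)$ is the distributive lattice generated by symbols $(i=0),(i=1)$ for $i\in I$ subject to $(i=0)\wedge(i=1)=0$. *)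

theory Defs
  imports Main "HOL-Library.FuncSet"
begin

datatype dmt = V nat | Zr | On | Mt dmt dmt | Jn dmt dmt | Ng dmt

inductive dmeq :: "dmt \<Rightarrow> dmt \<Rightarrow> bool" where
  refl: "dmeq x x"
| sym: "dmeq x y \<Longrightarrow> dmeq y x"
| trans: "dmeq x y \<Longrightarrow> dmeq y z \<Longrightarrow> dmeq x z"
| cong_Mt: "dmeq x x' \<Longrightarrow> dmeq y y' \<Longrightarrow> dmeq (Mt x y) (Mt x' y')"
| cong_Jn: "dmeq x x' \<Longrightarrow> dmeq y y' \<Longrightarrow> dmeq (Jn x y) (Jn x' y')"
| cong_Ng: "dmeq x x' \<Longrightarrow> dmeq (Ng x) (Ng x')"
| Mt_assoc: "dmeq (Mt (Mt x y) z) (Mt x (Mt y z))"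
| Jn_assoc: "dmeq (Jn (Jn x y) z) (Jn x (Jn y z))"
| Mt_comm: "dmeq (Mt x y) (Mt y x)"
| Jn_comm: "dmeq (Jn x y) (Jn y x)"
| Mt_idem: "dmeq (Mt x x) x"
| Jn_idem: "dmeq (Jn x x) x"
| Mt_absorb: "dmeq (Mt x (Jn x y)) x"
| Jn_absorb: "dmeq (Jn x (Mt x y)) x"
| distrib: "dmeq (Mt x (Jn y z)) (Jn (Mt x y) (Mt x z))"
| Mt_One: "dmeq (Mt x On) x"
| Jn_Zr: "dmeq (Jn x Zr) x"
| Ng_Ng: "dmeq (Ng (Ng x)) x"
| Ng_Mt: "dmeq (Ng (Mt x y)) (Jn (Ng x) (Ng y))"
| Ng_Jn: "dmeq (Ng (Jn x y)) (Mt (Ng x) (Ng y))"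
| Ng_Zr: "dmeq (Ng Zr) On"

quotient_type dm = dmt / dmeq
  by (rule equivpI) (auto simp: reflp_def symp_def transp_def intro: dmeq.intros)

fun tvars :: "dmt \<Rightarrow> nat set" where
  "tvars (V i) = {i}"
| "tvars Zr = {}"
| "tvars On = {}"
| "tvars (Mt x y) = tvars x \<union> tvars y"
| "tvars (Jn x y) = tvars x \<union> tvars y"
| "tvars (Ng x) = tvars x"

fun tsubst :: "(nat \<Rightarrow> dmt) \<Rightarrow> dmt \<Rightarrow> dmt" where
  "tsubst s (V i) = s i"
| "tsubst s Zr = Zr"
| "tsubst s On = On"
| "tsubst s (Mt x y) = Mt (tsubst s x) (tsubst s y)"
| "tsubst s (Jn x y) = Jn (tsubst s x) (tsubst s y)"
| "tsubst s (Ng x) = Ng (tsubst s x)"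

definition dM :: "nat set \<Rightarrow> dm set" where
  "dM I = {x. \<exists>t. x = abs_dm t \<and> tvars t \<subseteq> I}"

definition dOne :: dm where "dOne = abs_dm On"
definition dVar :: "nat \<Rightarrow> dm" where "dVar i = abs_dm (V i)"

definition dsubst :: "(nat \<Rightarrow> dm) \<Rightarrow> dm \<Rightarrow> dm" where
  "dsubst s x = abs_dm (tsubst (rep_dm \<circ> s) (rep_dm x))"

text \<open>Objects: finite sets of names.  A morphism K \<rightarrow> J is a function J \<rightarrow> dM(K)
  (extensional: undefined outside J).\<close>
definition hom :: "nat set \<Rightarrow> nat set \<Rightarrow> (nat \<Rightarrow> dm) set" where
  "hom K J = (J \<rightarrow>\<^sub>E dM K)"

text \<open>Composition by substitution: for h : L \<rightarrow> K and g : K \<rightarrow> J, g \<circ> h : L \<rightarrow> J.\<close>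
definition cmp :: "nat set \<Rightarrow> (nat \<Rightarrow> dm) \<Rightarrow> (nat \<Rightarrow> dm) \<Rightarrow> (nat \<Rightarrow> dm)" where
  "cmp J g h = (\<lambda>j\<in>J. dsubst h (g j))"

section \<open>Sieves, the presheaf F (image of I \<rightarrow> \<Omega>, r \<mapsto> (r = 1))\<close>

type_synonym sieve = "(nat set \<times> (nat \<Rightarrow> dm)) set"

definition eq1 :: "nat set \<Rightarrow> dm \<Rightarrow> sieve" where
  "eq1 J r = {(K, g). finite K \<and> g \<in> hom K J \<and> dsubst g r = dOne}"

definition FF :: "nat set \<Rightarrow> sieve set" where
  "FF J = eq1 J ` dM J"

definition sres :: "nat set \<Rightarrow> nat set \<Rightarrow> (nat \<Rightarrow> dm) \<Rightarrow> sieve \<Rightarrow> sieve" where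
  "sres J K g S = {(L, h). finite L \<and> h \<in> hom L K \<and> (L, cmp J g h) \<in> S}"

section \<open>The exponential F^I, (F^I)(J) = Nat(y J \<times> I, F)\<close>

type_synonym fam = "nat set \<Rightarrow> (nat \<Rightarrow> dm) \<Rightarrow> dm \<Rightarrow> sieve"

text \<open>An element f of (F^I)(J): for each stage K, g : K \<rightarrow> J and r \<in> I(K) = dM(K),
  f K g r \<in> F(K), natural in K; extensional (empty) outside its domain.\<close>
definition FI :: "nat set \<Rightarrow> fam set" where
  "FI J = {f.
     (\<forall>K g r. finite K \<and> g \<in> hom K J \<and> r \<in> dM K \<longrightarrow> f K g r \<in> FF K)
   \<and> (\<forall>K L g h r. finite K \<and> finite L \<and> g \<in> hom K J \<and> h \<in> hom L K \<and> r \<in> dM K \<longrightarrow>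
        f L (cmp J g h) (dsubst h r) = sres K L h (f K g r))
   \<and> (\<forall>K g r. \<not> (finite K \<and> g \<in> hom K J \<and> r \<in> dM K) \<longrightarrow> f K g r = {})}"

definition fres :: "nat set \<Rightarrow> nat set \<Rightarrow> (nat \<Rightarrow> dm) \<Rightarrow> fam \<Rightarrow> fam" where
  "fres J K g f = (\<lambda>L h r. if finite L \<and> h \<in> hom L K \<and> r \<in> dM L
                            then f L (cmp J g h) r else {})"

definition nat_FI_F :: "(nat set \<Rightarrow> fam \<Rightarrow> sieve) \<Rightarrow> bool" where
  "nat_FI_F A \<longleftrightarrow>
     (\<forall>J f. finite J \<and> f \<in> FI J \<longrightarrow> A J f \<in> FF J)
   \<and> (\<forall>J K g f. finite J \<and> finite K \<and> g \<in> hom K J \<and> f \<in> FI J \<longrightarrow>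
        A K (fres J K g f) = sres J K g (A J f))"

end

theory Submission
  imports Defs
begin


lemma abs_rep[simp]: "abs_dm (rep_dm x) = x"
  by (rule Quotient3_abs_rep[OF Quotient3_dm])

lemma rep_abs: "dmeq (rep_dm (abs_dm t)) t"
  using dm.abs_eq_iff[of "rep_dm (abs_dm t)" t] by simp

lemma dmeq_refl[simp]: "dmeq x x" by (rule dmeq.refl)

lemma tsubst_dmeq: "dmeq x y \<Longrightarrow> dmeq (tsubst s x) (tsubst s y)"
  by (induction rule: dmeq.induct) (auto intro: dmeq.intros)

lemma tsubst_cong: "(\<forall>j\<in>tvars t. dmeq (s j) (s' j)) \<Longrightarrow> dmeq (tsubst s t) (tsubst s' t)"
  by (induction t) (auto intro: dmeq.intros)

lemma tsubst_tsubst: "tsubst s (tsubst s' t) = tsubst (tsubst s \<circ> s') t"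
  by (induction t) auto

lemma tsubst_V: "tsubst V t = t"
  by (induction t) auto

lemma tvars_tsubst: "tvars (tsubst s t) = (\<Union>j\<in>tvars t. tvars (s j))"
  by (induction t) auto

lemma dsubst_abs: "dsubst h (abs_dm t) = abs_dm (tsubst (rep_dm \<circ> h) t)"
  unfolding dsubst_def dm.abs_eq_iff by (rule tsubst_dmeq[OF rep_abs])

lemma dM_E: assumes "x \<in> dM K" obtains t where "tvars t \<subseteq> K" "x = abs_dm t"
  using assms unfolding dM_def by blast

lemma dsubst_dVar: "dsubst q (dVar j) = q j"
  unfolding dVar_def dsubst_abs by simp

lemma dVar_dM: "j \<in> K \<Longrightarrow> dVar j \<in> dM K"
  unfolding dVar_def dM_def by force

lemma good_rep: "x \<in> dM K \<Longrightarrow> \<exists>t. tvars t \<subseteq> K \<and> x = abs_dm t"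
  unfolding dM_def by blast

lemma dsubst_in_dM:
  assumes h: "h \<in> hom L K" and x: "x \<in> dM K"
  shows "dsubst h x \<in> dM L"
proof -
  obtain t where t: "tvars t \<subseteq> K" "x = abs_dm t" using dM_E[OF x] by blast
  define u where "u j = (SOME u. tvars u \<subseteq> L \<and> h j = abs_dm u)" for j
  have u: "tvars (u j) \<subseteq> L \<and> h j = abs_dm (u j)" if "j \<in> K" for j
  proof -
    have "h j \<in> dM L" using h that unfolding hom_def by auto
    from good_rep[OF this] show ?thesis unfolding u_def by (rule someI_ex)
  qed
  have "dmeq (tsubst (rep_dm \<circ> h) t) (tsubst u t)"
    apply (rule tsubst_cong) using u t(1) rep_abs by auto
  hence "dsubst h x = abs_dm (tsubst u t)"
    unfolding t(2) dsubst_abs dm.abs_eq_iff .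
  moreover have "tvars (tsubst u t) \<subseteq> L" unfolding tvars_tsubst using u t(1) by blast
  ultimately show ?thesis unfolding dM_def by blast
qed

lemma dsubst_comp:
  assumes x: "x \<in> dM K"
  shows "dsubst h (dsubst g x) = dsubst (cmp K g h) x"
proof -
  obtain t where t: "tvars t \<subseteq> K" "x = abs_dm t" using dM_E[OF x] by blast
  have "dmeq (tsubst (rep_dm \<circ> h) (rep_dm (abs_dm (tsubst (rep_dm \<circ> g) t))))
              (tsubst (rep_dm \<circ> h) (tsubst (rep_dm \<circ> g) t))"
    by (rule tsubst_dmeq[OF rep_abs])
  moreover have "dmeq (tsubst (rep_dm \<circ> h) (tsubst (rep_dm \<circ> g) t)) (tsubst (rep_dm \<circ> cmp K g h) t)"
    unfolding tsubst_tsubst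
    apply (rule tsubst_cong)
    using t(1) by (auto simp: cmp_def dsubst_def intro: dmeq.sym[OF rep_abs])
  ultimately show ?thesis unfolding t(2) dsubst_abs dm.abs_eq_iff
    by simp
qed

lemma cmp_hom: "g \<in> hom M K \<Longrightarrow> h \<in> hom L M \<Longrightarrow> cmp K g h \<in> hom L K"
  unfolding hom_def cmp_def by (auto intro: dsubst_in_dM[unfolded hom_def])

lemma cmp_assoc: "g \<in> hom M J \<Longrightarrow> cmp J g (cmp M g' h) = cmp J (cmp J g g') h"
proof (intro ext)
  fix j assume g: "g \<in> hom M J"
  show "cmp J g (cmp M g' h) j = cmp J (cmp J g g') h j"
  proof (cases "j \<in> J")
    case True
    hence "g j \<in> dM M" using g unfolding hom_def by auto
    thus ?thesis using True dsubst_comp[of "g j" M h g'] by (simp add: cmp_def)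
  qed (simp add: cmp_def)
qed

definition idm :: "nat set \<Rightarrow> nat \<Rightarrow> dm" where "idm L = (\<lambda>j\<in>L. dVar j)"

lemma idm_hom: "L \<subseteq> L' \<Longrightarrow> idm L \<in> hom L' L"
  unfolding idm_def hom_def using dVar_dM by auto

lemma dsubst_idm: "x \<in> dM L \<Longrightarrow> dsubst (idm L) x = x"
proof -
  assume x: "x \<in> dM L"
  obtain t where t: "tvars t \<subseteq> L" "x = abs_dm t" using dM_E[OF x] by blast
  have "dmeq (tsubst (rep_dm \<circ> idm L) t) (tsubst V t)"
    apply (rule tsubst_cong) using t(1) rep_abs by (auto simp: idm_def dVar_def)
  thus ?thesis unfolding t(2) dsubst_abs dm.abs_eq_iff tsubst_V .
qed

lemma cmp_idm: "g \<in> hom L K \<Longrightarrow> cmp K g (idm L) = g"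
  unfolding cmp_def hom_def by (auto simp: PiE_def extensional_def Pi_def dsubst_idm intro!: ext)

lemma cmp_idm_left: "q \<in> hom K J' \<Longrightarrow> J \<subseteq> J' \<Longrightarrow> cmp J (idm J) q = restrict q J"
  unfolding cmp_def idm_def by (auto simp: dsubst_dVar)

fun ev :: "(nat \<Rightarrow> nat) \<Rightarrow> dmt \<Rightarrow> nat" where
  "ev \<rho> (V i) = \<rho> i"
| "ev \<rho> Zr = 0"
| "ev \<rho> On = 2"
| "ev \<rho> (Mt x y) = min (ev \<rho> x) (ev \<rho> y)"
| "ev \<rho> (Jn x y) = max (ev \<rho> x) (ev \<rho> y)"
| "ev \<rho> (Ng x) = 2 - ev \<rho> x"

definition ok :: "(nat \<Rightarrow> nat) \<Rightarrow> bool" where "ok \<rho> \<longleftrightarrow> (\<forall>j. \<rho> j \<le> 2)"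

lemma ev_le2: "ok \<rho> \<Longrightarrow> ev \<rho> t \<le> 2"
  by (induction t) (auto simp: ok_def)

lemma ev_sound: "dmeq x y \<Longrightarrow> ok \<rho> \<Longrightarrow> ev \<rho> x = ev \<rho> y"
proof (induction rule: dmeq.induct)
  case (Ng_Ng x)
  hence "ev \<rho> x \<le> 2" by (simp add: ev_le2)
  thus ?case by simp
next
  case (distrib x y z) thus ?case by (simp add: min_def max_def)
qed (auto simp: min_def max_def ev_le2)

lemma dmeq_Mt_Zr: "dmeq (Mt Zr x) Zr"
  by (meson dmeq.Jn_Zr dmeq.Jn_absorb dmeq.Jn_comm dmeq.sym dmeq.trans)
lemma dmeq_Jn_On: "dmeq (Jn On x) On"
  by (meson dmeq.Mt_One dmeq.Mt_absorb dmeq.Mt_comm dmeq.sym dmeq.trans)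

lemma ev_compl: "(ev (\<lambda>_. 1) t = 2 \<longrightarrow> dmeq t On) \<and> (ev (\<lambda>_. 1) t = 0 \<longrightarrow> dmeq t Zr)"
proof (induction t)
  case (Mt a b)
  have 1: "dmeq (Mt a b) On" if "dmeq a On" "dmeq b On"
    by (meson dmeq.Mt_One dmeq.cong_Mt dmeq.refl dmeq.trans that)
  have 2: "dmeq (Mt a b) Zr" if "dmeq a Zr"
    by (meson dmeq_Mt_Zr dmeq.cong_Mt dmeq.refl dmeq.trans that)
  have 3: "dmeq (Mt a b) Zr" if "dmeq b Zr"
    by (meson dmeq.Mt_comm dmeq_Mt_Zr dmeq.cong_Mt dmeq.refl dmeq.trans that)
  have "ev (\<lambda>_. 1) a \<le> 2" "ev (\<lambda>_. 1) b \<le> 2" by (rule ev_le2, simp add: ok_def)+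
  thus ?case using Mt 1 2 3 by (auto simp: min_def split: if_splits)
next
  case (Jn a b)
  have 1: "dmeq (Jn a b) Zr" if "dmeq a Zr" "dmeq b Zr"
    by (meson dmeq.Jn_Zr dmeq.cong_Jn dmeq.refl dmeq.trans that)
  have 2: "dmeq (Jn a b) On" if "dmeq a On"
    by (meson dmeq_Jn_On dmeq.cong_Jn dmeq.refl dmeq.trans that)
  have 3: "dmeq (Jn a b) On" if "dmeq b On"
    by (meson dmeq.Jn_comm dmeq_Jn_On dmeq.cong_Jn dmeq.refl dmeq.trans that)
  have "ev (\<lambda>_. 1) a \<le> 2" "ev (\<lambda>_. 1) b \<le> 2" by (rule ev_le2, simp add: ok_def)+
  thus ?case using Jn 1 2 3 by (auto simp: max_def split: if_splits)
next
  case (Ng a)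
  have "ev (\<lambda>_. 1) a \<le> 2" by (rule ev_le2) (simp add: ok_def)
  moreover have "dmeq (Ng On) Zr"
    by (meson dmeq.Ng_Ng dmeq.Ng_Zr dmeq.cong_Ng dmeq.sym dmeq.trans)
  ultimately show ?case using Ng
    by (auto intro: dmeq.trans[OF dmeq.cong_Ng] dmeq.Ng_Zr)
qed (auto intro: dmeq.intros)

lemma ev_tsubst: "ev \<rho> (tsubst s t) = ev (\<lambda>j. ev \<rho> (s j)) t"
  by (induction t) auto

lemma ev_vars: "\<forall>j\<in>tvars t. \<rho> j = \<rho>' j \<Longrightarrow> ev \<rho> t = ev \<rho>' t"
  by (induction t) auto

definition lei :: "nat \<Rightarrow> nat \<Rightarrow> bool" where "lei a b \<longleftrightarrow> a = 1 \<or> a = b"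

lemma ev_mono: "\<forall>j. lei (\<rho> j) (\<rho>' j) \<Longrightarrow> ok \<rho> \<Longrightarrow> ok \<rho>' \<Longrightarrow> lei (ev \<rho> t) (ev \<rho>' t)"
proof (induction t)
  case (Mt a b) thus ?case using ev_le2[of \<rho> a] ev_le2[of \<rho> b] ev_le2[of \<rho>' a] ev_le2[of \<rho>' b]
    by (auto simp: lei_def min_def)
next
  case (Jn a b) thus ?case using ev_le2[of \<rho> a] ev_le2[of \<rho> b] ev_le2[of \<rho>' a] ev_le2[of \<rho>' b]
    by (auto simp: lei_def max_def)
qed (auto simp: lei_def)

fun T1 :: "nat \<Rightarrow> dmt \<Rightarrow> dmt" and T0 :: "nat \<Rightarrow> dmt \<Rightarrow> dmt" where
  "T1 i (V j) = (if j = i then Zr else V j)"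
| "T1 i Zr = Zr"
| "T1 i On = On"
| "T1 i (Mt a b) = Mt (T1 i a) (T1 i b)"
| "T1 i (Jn a b) = Jn (T1 i a) (T1 i b)"
| "T1 i (Ng a) = T0 i a"
| "T0 i (V j) = (if j = i then Zr else Ng (V j))"
| "T0 i Zr = On"
| "T0 i On = Zr"
| "T0 i (Mt a b) = Jn (T0 i a) (T0 i b)"
| "T0 i (Jn a b) = Mt (T0 i a) (T0 i b)"
| "T0 i (Ng a) = T1 i a"

lemma T_correct: assumes okr: "ok \<rho>"
  shows "(ev \<rho> (T1 i t) = 2 \<longleftrightarrow> ev (\<rho>(i:=1)) t = 2) \<and> (ev \<rho> (T0 i t) = 2 \<longleftrightarrow> ev (\<rho>(i:=1)) t = 0)"
proof -
  have okm: "ok (\<rho>(i:=1))" using okr by (simp add: ok_def)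
  note bnd = ev_le2[OF okr] ev_le2[OF okm]
  show ?thesis
  proof (induction t)
    case (V x) thus ?case using okr by (auto simp: ok_def le_Suc_eq)
  next
    case (Ng a)
    have "ev (\<rho>(i:=1)) a \<le> 2" by (rule bnd)
    thus ?case using Ng by (auto simp: fun_upd_def)
  next
    case (Mt a b) thus ?case using bnd(1)[of "T1 i a"] bnd(1)[of "T1 i b"] bnd(1)[of "T0 i a"] bnd(1)[of "T0 i b"] bnd(2)[of a] bnd(2)[of b]
      by (auto simp: min_def max_def fun_upd_def)
  next
    case (Jn a b) thus ?case using bnd(1)[of "T1 i a"] bnd(1)[of "T1 i b"] bnd(1)[of "T0 i a"] bnd(1)[of "T0 i b"] bnd(2)[of a] bnd(2)[of b]
      by (auto simp: min_def max_def fun_upd_def)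
  qed auto
qed

lemma tvars_T: "tvars (T1 i t) \<subseteq> tvars t - {i} \<and> tvars (T0 i t) \<subseteq> tvars t - {i}"
  by (induction t) auto

definition E :: "dm \<Rightarrow> nat" where "E x = ev (\<lambda>_. 1) (rep_dm x)"
definition val :: "(nat \<Rightarrow> dm) \<Rightarrow> nat \<Rightarrow> nat" where "val g j = E (g j)"

lemma ok_one: "ok (\<lambda>_. 1)" by (simp add: ok_def)
lemma ok_val: "ok (val g)" unfolding ok_def val_def E_def using ev_le2[OF ok_one] by auto

lemma E_abs: "E (abs_dm t) = ev (\<lambda>_. 1) t"
  unfolding E_def using ev_sound[OF rep_abs ok_one] .

lemma dOne_iff: "x = dOne \<longleftrightarrow> E x = 2"
proof
  assume "x = dOne" thus "E x = 2" by (simp add: dOne_def E_abs)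
next
  assume "E x = 2"
  hence "dmeq (rep_dm x) On" using ev_compl unfolding E_def by blast
  hence "abs_dm (rep_dm x) = abs_dm On" unfolding dm.abs_eq_iff .
  thus "x = dOne" by (simp add: dOne_def)
qed

lemma E_dsubst: "E (dsubst h x) = ev (val h) (rep_dm x)"
  unfolding dsubst_def E_abs ev_tsubst by (simp add: val_def[abs_def] E_def comp_def)

lemma ev_rep_good: "ok \<rho> \<Longrightarrow> x = abs_dm t \<Longrightarrow> ev \<rho> (rep_dm x) = ev \<rho> t"
  using ev_sound[OF rep_abs] by blast

lemma ev_dM: "x \<in> dM K \<Longrightarrow> ok \<rho> \<Longrightarrow> ok \<rho>' \<Longrightarrow> \<forall>j\<in>K. \<rho> j = \<rho>' j \<Longrightarrow> ev \<rho> (rep_dm x) = ev \<rho>' (rep_dm x)"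
  by (erule dM_E) (metis ev_rep_good ev_vars subsetD)

lemma eq1_iff: "(L, h) \<in> eq1 J r \<longleftrightarrow> finite L \<and> h \<in> hom L J \<and> ev (val h) (rep_dm r) = 2"
  unfolding eq1_def using dOne_iff E_dsubst by auto




lemma E_le2: "E x \<le> 2" unfolding E_def by (rule ev_le2[OF ok_one])

lemma dsubst_dOne: "dsubst h dOne = dOne"
proof -
  have "E (dsubst h dOne) = 2" unfolding E_dsubst dOne_def using ev_rep_good[OF ok_val HOL.refl, of h On] by simp
  thus ?thesis using dOne_iff by blast
qed

lemma eq1_sieve:
  assumes a: "a \<in> dM J" and kg: "(K, g) \<in> eq1 J a" and h: "h \<in> hom L K" and L: "finite L"
  shows "(L, cmp J g h) \<in> eq1 J a"
proof -
  have g: "g \<in> hom K J" "dsubst g a = dOne" using kg unfolding eq1_def by auto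
  have "dsubst (cmp J g h) a = dOne"
    using dsubst_comp[OF a, of h g] g(2) dsubst_dOne by simp
  thus ?thesis using cmp_hom[OF g(1) h] L unfolding eq1_def by auto
qed

definition Afa :: "nat set \<Rightarrow> fam \<Rightarrow> sieve" where
  "Afa J f = {(K, g). finite K \<and> g \<in> hom K J \<and>
     (\<forall>L h r. finite L \<and> h \<in> hom L K \<and> r \<in> dM L \<longrightarrow> (L, idm L) \<in> f L (cmp J g h) r)}"

lemma FI_mem:
  assumes f: "f \<in> FI J" and "finite K" "g \<in> hom K J" "r \<in> dM K"
  shows "f K g r \<in> FF K"
proof -
  have "\<forall>K g r. finite K \<and> g \<in> hom K J \<and> r \<in> dM K \<longrightarrow> f K g r \<in> FF K"
    using f unfolding FI_def by (elim CollectE conjE) assumption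
  thus ?thesis using assms by blast
qed

lemma FI_nat:
  assumes f: "f \<in> FI J" and "finite K" "finite L" "g \<in> hom K J" "h \<in> hom L K" "r \<in> dM K"
  shows "f L (cmp J g h) (dsubst h r) = sres K L h (f K g r)"
proof -
  have nat: "\<forall>K L g h r. finite K \<and> finite L \<and> g \<in> hom K J \<and> h \<in> hom L K \<and> r \<in> dM K \<longrightarrow>
        f L (cmp J g h) (dsubst h r) = sres K L h (f K g r)"
    using f unfolding FI_def by (elim CollectE conjE) assumption
  show ?thesis using nat[rule_format, of K L g h r] assms by blast
qed

lemma FI_sieve:
  assumes f: "f \<in> FI J" and L: "finite L" and g: "g \<in> hom L J" and r: "r \<in> dM L"
    and L': "finite L'" and h: "h \<in> hom L' L"
  shows "(L', h) \<in> f L g r \<longleftrightarrow> (L', idm L') \<in> f L' (cmp J g h) (dsubst h r)"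
proof -
  have nat: "\<forall>K L g h r. finite K \<and> finite L \<and> g \<in> hom K J \<and> h \<in> hom L K \<and> r \<in> dM K \<longrightarrow>
        f L (cmp J g h) (dsubst h r) = sres K L h (f K g r)"
    using f unfolding FI_def by (elim CollectE conjE) assumption
  have "f L' (cmp J g h) (dsubst h r) = sres L L' h (f L g r)"
    using nat[rule_format, of L L' g h r] L g r L' h by blast
  thus ?thesis by (simp add: sres_def cmp_idm[OF h] idm_hom L')
qed

lemma adjunction:
  assumes J: "finite J" and \<phi>: "\<phi> \<in> FF J" and f: "f \<in> FI J"
  shows "(\<forall>K g r. finite K \<and> g \<in> hom K J \<and> r \<in> dM K \<longrightarrow> sres J K g \<phi> \<subseteq> f K g r)
        \<longleftrightarrow> \<phi> \<subseteq> Afa J f"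
proof
  obtain a where a: "a \<in> dM J" "\<phi> = eq1 J a" using \<phi> unfolding FF_def by auto
  {
    assume H: "\<forall>K g r. finite K \<and> g \<in> hom K J \<and> r \<in> dM K \<longrightarrow> sres J K g \<phi> \<subseteq> f K g r"
    show "\<phi> \<subseteq> Afa J f"
    proof
      fix x assume x: "x \<in> \<phi>"
      obtain K g where xe: "x = (K, g)" by (cases x)
      have K: "finite K" "g \<in> hom K J" using x xe a(2) unfolding eq1_def by auto
      have "(L, idm L) \<in> f L (cmp J g h) r" if L: "finite L" "h \<in> hom L K" "r \<in> dM L" for L h r
      proof -
        have gh: "cmp J g h \<in> hom L J" using cmp_hom[OF K(2) L(2)] .
        have "(L, cmp J (cmp J g h) (idm L)) \<in> \<phi>"
          unfolding cmp_idm[OF gh] a(2) using eq1_sieve[OF a(1)] x xe a(2) L by auto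
        hence "(L, idm L) \<in> sres J L (cmp J g h) \<phi>"
          unfolding sres_def using L idm_hom[of L L] by auto
        thus ?thesis using H L gh by blast
      qed
      thus "x \<in> Afa J f" unfolding xe Afa_def using K by auto
    qed
  }
  {
    assume H: "\<phi> \<subseteq> Afa J f"
    show "\<forall>K g r. finite K \<and> g \<in> hom K J \<and> r \<in> dM K \<longrightarrow> sres J K g \<phi> \<subseteq> f K g r"
    proof (intro allI impI subsetI)
      fix K g r x assume K: "finite K \<and> g \<in> hom K J \<and> r \<in> dM K" and x: "x \<in> sres J K g \<phi>"
      obtain L h where xe: "x = (L, h)" by (cases x)
      have L: "finite L" "h \<in> hom L K" "(L, cmp J g h) \<in> \<phi>" using x xe unfolding sres_def by auto
      have gh: "cmp J g h \<in> hom L J" using cmp_hom K L(2) by blast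
      have "(L, idm L) \<in> f L (cmp J (cmp J g h) (idm L)) (dsubst h r)"
        using H L(3) L(1) idm_hom[of L L] dsubst_in_dM[OF L(2)] K unfolding Afa_def by blast
      hence "(L, idm L) \<in> f L (cmp J g h) (dsubst h r)" unfolding cmp_idm[OF gh] .
      thus "x \<in> f K g r" unfolding xe using FI_sieve[OF f _ _ _ L(1) L(2)] K by blast
    qed
  }
qed

lemma naturality:
  assumes J: "finite J" and K: "finite K" and g: "g \<in> hom K J" and f: "f \<in> FI J"
  shows "Afa K (fres J K g f) = sres J K g (Afa J f)"
proof (intro set_eqI)
  fix x :: "nat set \<times> (nat \<Rightarrow> dm)"
  obtain K' :: "nat set" and g' :: "nat \<Rightarrow> dm" where xe: "x = (K', g')" by (cases x)
  have *: "(L, idm L) \<in> fres J K g f L (cmp K g' h) r \<longleftrightarrow> (L, idm L) \<in> f L (cmp J (cmp J g g') h) r"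
    if "g' \<in> hom K' K" "finite L" "h \<in> hom L K'" "r \<in> dM L" for L h r
    using that cmp_hom[OF that(1) that(3)] cmp_assoc[OF g] unfolding fres_def by simp
  show "x \<in> Afa K (fres J K g f) \<longleftrightarrow> x \<in> sres J K g (Afa J f)"
  proof (cases "finite K' \<and> g' \<in> hom K' K")
    case True
    have e: "(\<forall>L h r. finite L \<and> h \<in> hom L K' \<and> r \<in> dM L \<longrightarrow> (L, idm L) \<in> fres J K g f L (cmp K g' h) r)
      \<longleftrightarrow> (\<forall>L h r. finite L \<and> h \<in> hom L K' \<and> r \<in> dM L \<longrightarrow> (L, idm L) \<in> f L (cmp J (cmp J g g') h) r)"
      using *[OF True[THEN conjunct2]] by blast
    have gg: "cmp J g g' \<in> hom K' J" using cmp_hom[OF g] True by blast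
    show ?thesis using True gg e by (simp add: xe Afa_def sres_def)
  next
    case False
    thus ?thesis apply (simp add: xe Afa_def sres_def) by blast
  qed
qed

lemma in_FF:
  assumes J: "finite J" and f: "f \<in> FI J"
  shows "Afa J f \<in> FF J"
proof -
  obtain i where i: "i \<notin> J" using ex_new_if_finite[OF infinite_UNIV_nat J] by blast
  define J' where "J' = insert i J"
  have p: "idm J \<in> hom J' J" unfolding J'_def by (rule idm_hom) auto
  have di: "dVar i \<in> dM J'" unfolding J'_def by (rule dVar_dM) simp
  have J'f: "finite J'" using J J'_def by simp
  have "f J' (idm J) (dVar i) \<in> FF J'" by (rule FI_mem[OF f J'f p di])
  then obtain s where s: "s \<in> dM J'" "f J' (idm J) (dVar i) = eq1 J' s" unfolding FF_def by auto
  obtain t0 where t0: "tvars t0 \<subseteq> J'" "s = abs_dm t0" using dM_E[OF s(1)] by blast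
  have C: "(L, idm L) \<in> f L g'' r \<longleftrightarrow> ev (\<lambda>j. if j = i then E r else val g'' j) t0 = 2"
    if L: "finite L" "g'' \<in> hom L J" "r \<in> dM L" for L g'' r
  proof -
    define q where "q = (\<lambda>j\<in>J'. if j = i then r else g'' j)"
    have q: "q \<in> hom L J'" using L unfolding q_def hom_def J'_def by auto
    have nat: "f L (cmp J (idm J) q) (dsubst q (dVar i)) = sres J' L q (f J' (idm J) (dVar i))"
      by (rule FI_nat[OF f J'f L(1) p q di])
    have "cmp J (idm J) q = restrict q J" using cmp_idm_left[OF q, of J] unfolding J'_def by blast
    also have "restrict q J = g''"
      using L(2) i unfolding q_def hom_def J'_def
      by (auto simp: PiE_def extensional_def intro!: ext)
    finally have "cmp J (idm J) q = g''" .
    moreover have "dsubst q (dVar i) = r" unfolding dsubst_dVar q_def J'_def by simp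
    ultimately have fe: "f L g'' r = sres J' L q (eq1 J' s)" using nat s(2) by simp
    have "(L, idm L) \<in> f L g'' r \<longleftrightarrow> (L, q) \<in> eq1 J' s"
      unfolding fe sres_def using L(1) idm_hom[of L L] cmp_idm[OF q] by auto
    also have "\<dots> \<longleftrightarrow> ev (val q) t0 = 2"
      unfolding eq1_iff using q L(1) ev_rep_good[OF ok_val t0(2)] by auto
    also have "ev (val q) t0 = ev (\<lambda>j. if j = i then E r else val g'' j) t0"
      apply (rule ev_vars) using t0(1) unfolding q_def val_def J'_def by auto
    finally show ?thesis .
  qed
  define t1 where "t1 = T1 i t0"
  have t1v: "tvars t1 \<subseteq> J" using tvars_T[of i t0] t0(1) unfolding t1_def J'_def by auto
  have "Afa J f = eq1 J (abs_dm t1)"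
  proof (intro set_eqI)
    fix x :: "nat set \<times> (nat \<Rightarrow> dm)"
    obtain K :: "nat set" and g :: "nat \<Rightarrow> dm" where xe: "x = (K, g)" by (cases x)
    have "(K, g) \<in> Afa J f \<longleftrightarrow> finite K \<and> g \<in> hom K J \<and> ev ((val g)(i:=1)) t0 = 2"
    proof (intro iffI conjI)
      assume A: "(K, g) \<in> Afa J f"
      thus K: "finite K" "g \<in> hom K J" unfolding Afa_def by auto
      obtain k where k: "k \<notin> K" using ex_new_if_finite[OF infinite_UNIV_nat K(1)] by blast
      have "(insert k K, idm (insert k K)) \<in> f (insert k K) (cmp J g (idm K)) (dVar k)"
        using A K idm_hom[of K "insert k K"] dVar_dM[of k "insert k K"] unfolding Afa_def by blast
      hence "ev (\<lambda>j. if j = i then E (dVar k) else val (cmp J g (idm K)) j) t0 = 2"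
        using C[of "insert k K" "cmp J g (idm K)" "dVar k"] K cmp_hom[OF K(2) idm_hom[of K "insert k K"]]
          dVar_dM[of k "insert k K"] by auto
      moreover have e1: "E (dVar k) = 1" unfolding dVar_def E_abs by simp
      moreover have e2: "cmp J g (idm K) = g" by (rule cmp_idm[OF K(2)])
      ultimately show "ev ((val g)(i:=1)) t0 = 2" by (simp only: e1 e2 fun_upd_def)
    next
      assume H: "finite K \<and> g \<in> hom K J \<and> ev ((val g)(i:=1)) t0 = 2"
      have "(L, idm L) \<in> f L (cmp J g h) r" if L: "finite L" "h \<in> hom L K" "r \<in> dM L" for L h r
      proof -
        let ?\<rho> = "\<lambda>j. if j = i then E r else val (cmp J g h) j"
        have le: "lei (((val g)(i:=1)) j) (?\<rho> j)" for j
        proof (cases "j = i")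
          case True thus ?thesis by (simp add: lei_def)
        next
          case False
          show ?thesis
          proof (cases "j \<in> J")
            case True
            have "val (cmp J g h) j = ev (val h) (rep_dm (g j))"
              using True by (simp add: val_def cmp_def E_dsubst)
            moreover have "val g j = ev (\<lambda>_. 1) (rep_dm (g j))" by (simp add: val_def E_def)
            moreover have "lei (ev (\<lambda>_. 1) (rep_dm (g j))) (ev (val h) (rep_dm (g j)))"
              by (rule ev_mono) (auto simp: lei_def ok_def val_def E_le2)
            ultimately show ?thesis using False by simp
          next
            case nJ: False
            have "g j = undefined" using H nJ by (auto simp: hom_def PiE_def extensional_def)
            thus ?thesis using False nJ by (simp add: lei_def cmp_def val_def)
          qed
        qed
        have ok1: "ok ((val g)(i:=1))" using ok_val[of g] by (simp add: ok_def)
        have ok2: "ok ?\<rho>" using ok_val[of "cmp J g h"] E_le2 by (simp add: ok_def)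
        have "lei (ev ((val g)(i:=1)) t0) (ev ?\<rho> t0)" by (rule ev_mono[OF _ ok1 ok2]) (use le in auto)
        hence "ev ?\<rho> t0 = 2" using H by (simp add: lei_def)
        thus ?thesis using C[OF L(1) cmp_hom[OF _ L(2)] L(3)] H by blast
      qed
      thus "(K, g) \<in> Afa J f" using H unfolding Afa_def by auto
    qed
    also have "\<dots> \<longleftrightarrow> (K, g) \<in> eq1 J (abs_dm t1)"
      unfolding eq1_iff ev_rep_good[OF ok_val HOL.refl] t1_def using T_correct[OF ok_val] by blast
    finally show "x \<in> Afa J f \<longleftrightarrow> x \<in> eq1 J (abs_dm t1)" unfolding xe .
  qed
  moreover have "abs_dm t1 \<in> dM J" using t1v unfolding dM_def by blast
  ultimately show ?thesis unfolding FF_def by blast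
qed

theorem mainTheorem6:
  shows "\<exists>A. nat_FI_F A \<and>
    (\<forall>J \<phi> f. finite J \<and> \<phi> \<in> FF J \<and> f \<in> FI J \<longrightarrow>
       ((\<forall>K g r. finite K \<and> g \<in> hom K J \<and> r \<in> dM K \<longrightarrow> sres J K g \<phi> \<subseteq> f K g r)
        \<longleftrightarrow> \<phi> \<subseteq> A J f))"
proof (rule exI[of _ Afa], intro conjI)
  show "nat_FI_F Afa" unfolding nat_FI_F_def
  proof (intro conjI allI impI)
    fix J f assume "finite J \<and> f \<in> FI J"
    thus "Afa J f \<in> FF J" by (intro in_FF) simp_all
  next
    fix J K g f assume "finite J \<and> finite K \<and> g \<in> hom K J \<and> f \<in> FI J"
    thus "Afa K (fres J K g f) = sres J K g (Afa J f)" by (intro naturality) simp_all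
  qed
next
  show "\<forall>J \<phi> f. finite J \<and> \<phi> \<in> FF J \<and> f \<in> FI J \<longrightarrow>
       ((\<forall>K g r. finite K \<and> g \<in> hom K J \<and> r \<in> dM K \<longrightarrow> sres J K g \<phi> \<subseteq> f K g r)
        \<longleftrightarrow> \<phi> \<subseteq> Afa J f)"
  proof (intro allI impI)
    fix J \<phi> f assume a: "finite J \<and> \<phi> \<in> FF J \<and> f \<in> FI J"
    show "(\<forall>K g r. finite K \<and> g \<in> hom K J \<and> r \<in> dM K \<longrightarrow> sres J K g \<phi> \<subseteq> f K g r)
        \<longleftrightarrow> \<phi> \<subseteq> Afa J f"
      by (rule adjunction) (use a in simp_all)
  qed
qed


end
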